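(* For every series-parallel digraph $D$, the quantity $\phi(D)$ takes the same value for every binary decomposition tree of $D$.
   Context: A series-parallel digraph with source $s$ and sink $t$ is either a single arc from $s$ to $t$, or a series composition $D'\circ D''$ (identify the sink of $D'$ with the source of $D''$), or a parallel composition $D'\parallel D''$ (identify the two sources and the two sinks) of two series-parallel digraphs; parallel arcs are allowed. A binary decomposition tree of $D$ is a rooted binary tree whose leaves correspond bijectively to the arcs of $D$ and each internal vertex is labeled $S$ or $P$ and represents the series, respectively parallel, composition of the graphs of its two children, the root representing $D$. An $S$-component is a maximal connected set of tree vertices labeled $S$. For a given binary decomposition tree, $\phi(D)$ is defined as the maximum, over all root-to-leaf paths, of the number of distinct $S$-components the path traverses. *)

theory Defs
  imports Main
begin

datatype 'e dtree = Leaf 'e | SNode "'e dtree" "'e dtree" | PNode "'e dtree" "'e dtree"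

fun leaves :: "'e dtree \<Rightarrow> 'e list" where
  "leaves (Leaf e) = [e]"
| "leaves (SNode l r) = leaves l @ leaves r"
| "leaves (PNode l r) = leaves l @ leaves r"

definition tverts :: "('e \<Rightarrow> 'v) \<Rightarrow> ('e \<Rightarrow> 'v) \<Rightarrow> 'e dtree \<Rightarrow> 'v set" where
  "tverts tail head T = tail ` set (leaves T) \<union> head ` set (leaves T)"

text \<open>Identification of vertices is modelled by requiring
  the two parts to share exactly the identified vertices.\<close>
inductive realises :: "('e \<Rightarrow> 'v) \<Rightarrow> ('e \<Rightarrow> 'v) \<Rightarrow> 'e dtree \<Rightarrow> 'v \<Rightarrow> 'v \<Rightarrow> bool"
  for tail head where
  arc: "tail e = s \<Longrightarrow> head e = t \<Longrightarrow> s \<noteq> t \<Longrightarrow> realises tail head (Leaf e) s t"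
| ser: "realises tail head T1 s m \<Longrightarrow> realises tail head T2 m t
        \<Longrightarrow> tverts tail head T1 \<inter> tverts tail head T2 = {m}
        \<Longrightarrow> realises tail head (SNode T1 T2) s t"
| par: "realises tail head T1 s t \<Longrightarrow> realises tail head T2 s t
        \<Longrightarrow> tverts tail head T1 \<inter> tverts tail head T2 = {s, t}
        \<Longrightarrow> realises tail head (PNode T1 T2) s t"

definition is_decomp_tree ::
  "'e set \<Rightarrow> ('e \<Rightarrow> 'v) \<Rightarrow> ('e \<Rightarrow> 'v) \<Rightarrow> 'v \<Rightarrow> 'v \<Rightarrow> 'e dtree \<Rightarrow> bool" where
  "is_decomp_tree A tail head s t T \<longleftrightarrow>
     distinct (leaves T) \<and> set (leaves T) = A \<and> realises tail head T s t"

definition sp_digraph :: "'e set \<Rightarrow> ('e \<Rightarrow> 'v) \<Rightarrow> ('e \<Rightarrow> 'v) \<Rightarrow> 'v \<Rightarrow> 'v \<Rightarrow> bool" where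
  "sp_digraph A tail head s t \<longleftrightarrow> (\<exists>T. is_decomp_tree A tail head s t T)"

text \<open>Root-to-leaf paths, recorded as the list of labels (True = S, False = P)
  of the internal vertices traversed, from the root downwards.\<close>
fun label_paths :: "'e dtree \<Rightarrow> bool list set" where
  "label_paths (Leaf e) = {[]}"
| "label_paths (SNode l r) = (\<lambda>p. True # p) ` (label_paths l \<union> label_paths r)"
| "label_paths (PNode l r) = (\<lambda>p. False # p) ` (label_paths l \<union> label_paths r)"

text \<open>Number of maximal runs of S-labels along a path; since S-components are connected
  subtrees, these runs are exactly the distinct S-components traversed by the path.\<close>
fun s_runs :: "bool list \<Rightarrow> nat" where
  "s_runs [] = 0"
| "s_runs [b] = (if b then 1 else 0)"
| "s_runs (b # c # p) = (if b \<and> \<not> c then 1 else 0) + s_runs (c # p)"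

definition phi :: "'e dtree \<Rightarrow> nat" where
  "phi T = Max (s_runs ` label_paths T)"

end

theory Submission
  imports Defs
begin

fun isS :: "'e dtree \<Rightarrow> bool" where
  "isS (SNode l r) = True" | "isS (Leaf e) = False" | "isS (PNode l r) = False"

definition hval :: "'e dtree \<Rightarrow> nat" where
  "hval X = phi X + (if isS X then 0 else 1)"

lemma lp_fin: "finite (label_paths T)"
  by (induction T) auto

lemma lp_ne: "label_paths T \<noteq> {}"
  by (induction T) auto

lemma s_runs_False: "s_runs (False # p) = s_runs p"
  by (cases p) auto

lemma s_runs_True: "s_runs (True # p) = s_runs p + (if p = [] \<or> hd p = False then 1 else 0)"
  by (cases p) auto

lemma s_runs_True_lp: "p \<in> label_paths X \<Longrightarrow> s_runs (True # p) = s_runs p + (if isS X then 0 else 1)"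
  by (cases X) (auto simp: s_runs_True)

lemma phi_Leaf: "phi (Leaf e) = 0" by (simp add: phi_def)

lemma phi_P: "phi (PNode l r) = max (phi l) (phi r)"
proof -
  have "phi (PNode l r) = Max (s_runs ` (label_paths l \<union> label_paths r))"
    by (simp add: phi_def image_image s_runs_False)
  also have "\<dots> = max (phi l) (phi r)"
    by (simp add: phi_def image_Un Max_Un lp_fin lp_ne)
  finally show ?thesis .
qed

lemma Max_shift: "Max ((\<lambda>p. s_runs (True # p)) ` label_paths X) = hval X"
proof -
  have "(\<lambda>p. s_runs (True # p)) ` label_paths X = (\<lambda>p. s_runs p + (if isS X then 0 else 1)) ` label_paths X"
    using s_runs_True_lp by (metis (no_types, lifting) image_cong)
  then show ?thesis
    by (simp add: hval_def phi_def Max_add_commute lp_fin lp_ne)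
qed

lemma phi_S: "phi (SNode l r) = max (hval l) (hval r)"
proof -
  have "phi (SNode l r) = Max ((\<lambda>p. s_runs (True # p)) ` (label_paths l \<union> label_paths r))"
    by (simp add: phi_def image_image)
  also have "\<dots> = max (hval l) (hval r)"
    by (simp add: image_Un Max_Un lp_fin lp_ne Max_shift[symmetric])
  finally show ?thesis .
qed

lemma hval_S: "isS X \<Longrightarrow> hval X = phi X" by (simp add: hval_def)

context
  fixes tail head :: "'e \<Rightarrow> 'v"
begin

definition arcrel :: "'e set \<Rightarrow> ('v \<times> 'v) set" where
  "arcrel B = {(tail e, head e) | e. e \<in> B}"

definition verts :: "'e set \<Rightarrow> 'v set" where
  "verts B = tail ` B \<union> head ` B"

abbreviation arcs :: "'e dtree \<Rightarrow> 'e set" where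
  "arcs T \<equiv> set (leaves T)"

lemma tverts_verts: "tverts tail head T = verts (arcs T)"
  by (simp add: tverts_def verts_def)

lemma verts_Un: "verts (A \<union> B) = verts A \<union> verts B"
  by (auto simp: verts_def)

lemma verts_mono: "A \<subseteq> B \<Longrightarrow> verts A \<subseteq> verts B"
  by (auto simp: verts_def)

lemma arcrel_mono: "A \<subseteq> B \<Longrightarrow> (arcrel A)\<^sup>* \<subseteq> (arcrel B)\<^sup>*"
  by (rule rtrancl_mono) (auto simp: arcrel_def)

lemma arcrel_iff: "(x, y) \<in> arcrel A \<longleftrightarrow> (\<exists>e\<in>A. tail e = x \<and> head e = y)"
  by (auto simp: arcrel_def)

lemma fwd_closure:
  assumes cl: "\<forall>e\<in>A. tail e \<in> W \<longrightarrow> e \<in> B \<and> head e \<in> W"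
    and p: "(x, y) \<in> (arcrel A)\<^sup>*" and x: "x \<in> W"
  shows "(x, y) \<in> (arcrel B)\<^sup>* \<and> y \<in> W"
  using p
proof (induction rule: rtrancl_induct)
  case base then show ?case using x by simp
next
  case (step y z)
  then obtain e where e: "e \<in> A" "tail e = y" "head e = z" by (auto simp: arcrel_iff)
  with step cl have "e \<in> B" "z \<in> W" by auto
  then have "(y, z) \<in> arcrel B" using e by (auto simp: arcrel_iff)
  with step \<open>z \<in> W\<close> show ?case by (meson rtrancl.rtrancl_into_rtrancl)
qed

lemma bwd_closure:
  assumes cl: "\<forall>e\<in>A. head e \<in> W \<longrightarrow> e \<in> B \<and> tail e \<in> W"
    and p: "(x, y) \<in> (arcrel A)\<^sup>*" and y: "y \<in> W"
  shows "(x, y) \<in> (arcrel B)\<^sup>* \<and> x \<in> W"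
  using p
proof (induction rule: converse_rtrancl_induct)
  case base then show ?case using y by simp
next
  case (step x z)
  then obtain e where e: "e \<in> A" "tail e = x" "head e = z" by (auto simp: arcrel_iff)
  with step cl have "e \<in> B" "x \<in> W" by auto
  then have "(x, z) \<in> arcrel B" using e by (auto simp: arcrel_iff)
  with step \<open>x \<in> W\<close> show ?case by (meson converse_rtrancl_into_rtrancl)
qed

lemma no_in_s:
  assumes "\<forall>e\<in>A. head e \<noteq> s" "(x, s) \<in> (arcrel A)\<^sup>*" shows "x = s"
  using assms(2) by (cases rule: rtranclE) (use assms(1) in \<open>auto simp: arcrel_iff\<close>)

lemma no_out_t:
  assumes "\<forall>e\<in>A. tail e \<noteq> t" "(t, y) \<in> (arcrel A)\<^sup>*" shows "y = t"
  using assms(2) by (cases rule: converse_rtranclE) (use assms(1) in \<open>auto simp: arcrel_iff\<close>)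

lemma path_end_verts:
  assumes "(x, y) \<in> (arcrel A)\<^sup>*" "x \<noteq> y" shows "x \<in> verts A \<and> y \<in> verts A"
proof -
  have "y \<in> verts A" using assms(1,2)
    by (cases rule: rtranclE) (auto simp: arcrel_iff verts_def)
  moreover have "x \<in> verts A" using assms(1,2)
    by (cases rule: converse_rtranclE) (auto simp: arcrel_iff verts_def)
  ultimately show ?thesis by simp
qed


lemma tverts_S: "tverts tail head (SNode l r) = tverts tail head l \<union> tverts tail head r"
  by (auto simp: tverts_def)
lemma tverts_P: "tverts tail head (PNode l r) = tverts tail head l \<union> tverts tail head r"
  by (auto simp: tverts_def)

lemma r_st: "realises tail head T s t \<Longrightarrow> s \<in> tverts tail head T \<and> t \<in> tverts tail head T"
  by (induction rule: realises.induct) (auto simp: tverts_def)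

lemma r_neq: "realises tail head T s t \<Longrightarrow> s \<noteq> t"
proof (induction rule: realises.induct)
  case (ser T1 s m T2 t)
  then show ?case using r_st[OF ser.hyps(1)] r_st[OF ser.hyps(2)] by auto
qed auto

lemma r_ht: "realises tail head T s t \<Longrightarrow> e \<in> arcs T \<Longrightarrow> head e \<noteq> s \<and> tail e \<noteq> t"
proof (induction arbitrary: e rule: realises.induct)
  case (arc e s t) then show ?case by auto
next
  case (ser T1 s m T2 t)
  show ?case
  proof (cases "e \<in> arcs T1")
    case True
    then have "tail e \<in> tverts tail head T1" by (auto simp: tverts_def)
    then show ?thesis using ser True r_st[OF ser.hyps(2)] by auto
  next
    case False
    then have e2: "e \<in> arcs T2" using ser by auto
    then have "head e \<in> tverts tail head T2" by (auto simp: tverts_def)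
    then show ?thesis using ser e2 r_st[OF ser.hyps(1)] by auto
  qed
next
  case (par T1 s t T2) then show ?case by auto
qed

lemma r_out_s: "realises tail head T s t \<Longrightarrow> \<exists>e\<in>arcs T. tail e = s"
  by (induction rule: realises.induct) auto

lemma r_reach: "realises tail head T s t \<Longrightarrow> v \<in> tverts tail head T \<Longrightarrow>
   (s, v) \<in> (arcrel (arcs T))\<^sup>* \<and> (v, t) \<in> (arcrel (arcs T))\<^sup>*"
proof (induction arbitrary: v rule: realises.induct)
  case (arc e s t)
  then have "(s, t) \<in> arcrel (arcs (Leaf e))" by (auto simp: arcrel_iff)
  then show ?case using arc by (auto simp: tverts_def)
next
  case (ser T1 s m T2 t)
  have m1: "(arcrel (arcs T1))\<^sup>* \<subseteq> (arcrel (arcs (SNode T1 T2)))\<^sup>*" by (rule arcrel_mono) auto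
  have m2: "(arcrel (arcs T2))\<^sup>* \<subseteq> (arcrel (arcs (SNode T1 T2)))\<^sup>*" by (rule arcrel_mono) auto
  have a: "(s, m) \<in> (arcrel (arcs (SNode T1 T2)))\<^sup>*" "(m, t) \<in> (arcrel (arcs (SNode T1 T2)))\<^sup>*"
    using ser.IH r_st[OF ser.hyps(1)] r_st[OF ser.hyps(2)] m1 m2 by blast+
  from ser.prems have "v \<in> tverts tail head T1 \<or> v \<in> tverts tail head T2" by (simp add: tverts_S)
  then show ?case
  proof
    assume v: "v \<in> tverts tail head T1"
    then show ?thesis using ser.IH(1)[OF v] m1 a by (meson rtrancl_trans subsetD)
  next
    assume v: "v \<in> tverts tail head T2"
    then show ?thesis using ser.IH(2)[OF v] m2 a by (meson rtrancl_trans subsetD)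
  qed
next
  case (par T1 s t T2)
  have m1: "(arcrel (arcs T1))\<^sup>* \<subseteq> (arcrel (arcs (PNode T1 T2)))\<^sup>*" by (rule arcrel_mono) auto
  have m2: "(arcrel (arcs T2))\<^sup>* \<subseteq> (arcrel (arcs (PNode T1 T2)))\<^sup>*" by (rule arcrel_mono) auto
  from par.prems have "v \<in> tverts tail head T1 \<or> v \<in> tverts tail head T2" by (simp add: tverts_P)
  then show ?case using par.IH m1 m2 by blast
qed


definition iscut :: "'e set \<Rightarrow> 'v \<Rightarrow> 'v \<Rightarrow> 'v \<Rightarrow> bool" where
  "iscut A m s t \<longleftrightarrow> m \<noteq> s \<and> m \<noteq> t \<and>
     (\<forall>e\<in>A. (head e, m) \<in> (arcrel A)\<^sup>* \<or> (m, tail e) \<in> (arcrel A)\<^sup>*)"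

lemma series_is_cut:
  assumes L: "realises tail head L s m" and R: "realises tail head R m t"
    and I: "tverts tail head L \<inter> tverts tail head R = {m}"
  shows "iscut (arcs L \<union> arcs R) m s t"
proof -
  have m1: "(arcrel (arcs L))\<^sup>* \<subseteq> (arcrel (arcs L \<union> arcs R))\<^sup>*" by (rule arcrel_mono) auto
  have m2: "(arcrel (arcs R))\<^sup>* \<subseteq> (arcrel (arcs L \<union> arcs R))\<^sup>*" by (rule arcrel_mono) auto
  have "\<forall>e\<in>arcs L \<union> arcs R. (head e, m) \<in> (arcrel (arcs L \<union> arcs R))\<^sup>* \<or> (m, tail e) \<in> (arcrel (arcs L \<union> arcs R))\<^sup>*"
  proof
    fix e assume "e \<in> arcs L \<union> arcs R"
    then show "(head e, m) \<in> (arcrel (arcs L \<union> arcs R))\<^sup>* \<or> (m, tail e) \<in> (arcrel (arcs L \<union> arcs R))\<^sup>*"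
    proof
      assume e: "e \<in> arcs L"
      then have "head e \<in> tverts tail head L" by (auto simp: tverts_def)
      then show ?thesis using r_reach[OF L] m1 by blast
    next
      assume e: "e \<in> arcs R"
      then have "tail e \<in> tverts tail head R" by (auto simp: tverts_def)
      then show ?thesis using r_reach[OF R] m2 by blast
    qed
  qed
  then show ?thesis using r_neq[OF L] r_neq[OF R] by (auto simp: iscut_def)
qed

lemma cut_split_contra1:
  assumes ns: "\<forall>e\<in>A. head e \<noteq> s" and nt: "\<forall>e\<in>A. tail e \<noteq> t"
    and cut: "iscut A m s t" and BC: "B \<union> C = A" and Cne: "C \<noteq> {}"
    and V: "verts B \<inter> verts C \<subseteq> {s, t}" and mC: "m \<notin> verts C"
  shows False
proof -
  obtain e where e: "e \<in> C" using Cne by auto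
  then have eA: "e \<in> A" using BC by auto
  from cut eA have "(head e, m) \<in> (arcrel A)\<^sup>* \<or> (m, tail e) \<in> (arcrel A)\<^sup>*" by (auto simp: iscut_def)
  then show False
  proof
    assume p: "(head e, m) \<in> (arcrel A)\<^sup>*"
    have cl: "\<forall>e\<in>A. tail e \<in> verts C - {s} \<longrightarrow> e \<in> A \<and> head e \<in> verts C - {s}"
    proof (intro ballI impI)
      fix e' assume e': "e' \<in> A" "tail e' \<in> verts C - {s}"
      have "tail e' \<noteq> t" using nt e' by auto
      then have "e' \<notin> B" using e' V by (auto simp: verts_def)
      then have "e' \<in> C" using e' BC by auto
      then show "e' \<in> A \<and> head e' \<in> verts C - {s}" using e' ns by (auto simp: verts_def)
    qed
    have "head e \<in> verts C - {s}" using e eA ns by (auto simp: verts_def)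
    from fwd_closure[OF cl p this] have "m \<in> verts C" by auto
    then show False using mC by simp
  next
    assume p: "(m, tail e) \<in> (arcrel A)\<^sup>*"
    have cl: "\<forall>e\<in>A. head e \<in> verts C - {t} \<longrightarrow> e \<in> A \<and> tail e \<in> verts C - {t}"
    proof (intro ballI impI)
      fix e' assume e': "e' \<in> A" "head e' \<in> verts C - {t}"
      have "head e' \<noteq> s" using ns e' by auto
      then have "e' \<notin> B" using e' V by (auto simp: verts_def)
      then have "e' \<in> C" using e' BC by auto
      then show "e' \<in> A \<and> tail e' \<in> verts C - {t}" using e' nt by (auto simp: verts_def)
    qed
    have "tail e \<in> verts C - {t}" using e eA nt by (auto simp: verts_def)
    from bwd_closure[OF cl p this] have "m \<in> verts C" by auto
    then show False using mC by simp
  qed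
qed

lemma cut_split_contra:
  assumes T: "realises tail head T s t"
    and cut: "iscut (arcs T) m s t" and BC: "B \<union> C = arcs T" and Bne: "B \<noteq> {}" and Cne: "C \<noteq> {}"
    and V: "verts B \<inter> verts C \<subseteq> {s, t}"
  shows False
proof -
  have ns: "\<forall>e\<in>arcs T. head e \<noteq> s" and nt: "\<forall>e\<in>arcs T. tail e \<noteq> t" using r_ht[OF T] by auto
  have "m \<notin> verts C \<or> m \<notin> verts B" using V cut by (auto simp: iscut_def)
  then show False
  proof
    assume "m \<notin> verts C"
    then show False using cut_split_contra1[OF ns nt cut BC Cne V] by simp
  next
    assume "m \<notin> verts B"
    moreover have "verts C \<inter> verts B \<subseteq> {s, t}" using V by auto
    moreover have "C \<union> B = arcs T" using BC by auto
    ultimately show False using cut_split_contra1[OF ns nt cut _ Bne] by blast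
  qed
qed

lemma cut_in_verts: "iscut A m s t \<Longrightarrow> A \<noteq> {} \<Longrightarrow> m \<in> verts A"
proof -
  assume c: "iscut A m s t" and ne: "A \<noteq> {}"
  then obtain e where e: "e \<in> A" by auto
  then have "(head e, m) \<in> (arcrel A)\<^sup>* \<or> (m, tail e) \<in> (arcrel A)\<^sup>*" using c by (auto simp: iscut_def)
  then show ?thesis
  proof
    assume "(head e, m) \<in> (arcrel A)\<^sup>*"
    then show ?thesis using path_end_verts e by (cases "head e = m") (auto simp: verts_def)
  next
    assume "(m, tail e) \<in> (arcrel A)\<^sup>*"
    then show ?thesis using path_end_verts e by (cases "tail e = m") (auto simp: verts_def)
  qed
qed


lemma r_ne: "realises tail head T s t \<Longrightarrow> arcs T \<noteq> {}"
  by (drule r_out_s) auto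

lemma tverts_mono: "arcs X \<subseteq> arcs Y \<Longrightarrow> tverts tail head X \<subseteq> tverts tail head Y"
  by (auto simp: tverts_def)

lemma cut_lemma:
  "realises tail head T s t \<Longrightarrow> distinct (leaves T) \<Longrightarrow> iscut (arcs T) m s t \<Longrightarrow>
   isS T \<and> (\<exists>T' T''. realises tail head T' s m \<and> realises tail head T'' m t \<and>
      tverts tail head T' \<inter> tverts tail head T'' = {m} \<and> distinct (leaves T' @ leaves T'') \<and>
      arcs T' \<union> arcs T'' = arcs T \<and> phi (SNode T' T'') = phi T)"
proof (induction arbitrary: m rule: realises.induct)
  case (arc e s t)
  have A: "arcs (Leaf e) = {e}" by simp
  have ns: "\<forall>e'\<in>arcs (Leaf e). head e' \<noteq> s" and nt: "\<forall>e'\<in>arcs (Leaf e). tail e' \<noteq> t"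
    using arc by auto
  from arc.prems(2) have "(head e, m) \<in> (arcrel (arcs (Leaf e)))\<^sup>* \<or> (m, tail e) \<in> (arcrel (arcs (Leaf e)))\<^sup>*"
    and mst: "m \<noteq> s" "m \<noteq> t" by (auto simp: iscut_def)
  then show ?case using no_in_s[OF ns] no_out_t[OF nt] arc.hyps by auto
next
  case (par T1 s t T2)
  have T: "realises tail head (PNode T1 T2) s t" using par.hyps by (rule realises.par)
  have "verts (arcs T1) \<inter> verts (arcs T2) \<subseteq> {s, t}" using par.hyps(3) by (simp add: tverts_verts)
  then show ?case using cut_split_contra[OF T par.prems(2), of "arcs T1" "arcs T2"]
      r_ne[OF par.hyps(1)] r_ne[OF par.hyps(2)] by auto
next
  case (ser L s m0 R t)
  have T: "realises tail head (SNode L R) s t" using ser.hyps by (rule realises.ser)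
  have dL: "distinct (leaves L)" and dR: "distinct (leaves R)" and dLR: "arcs L \<inter> arcs R = {}"
    using ser.prems(1) by auto
  have cut: "iscut (arcs L \<union> arcs R) m s t" using ser.prems(2) by simp
  have ns: "\<forall>e\<in>arcs L \<union> arcs R. head e \<noteq> s" and nt: "\<forall>e\<in>arcs L \<union> arcs R. tail e \<noteq> t"
    using r_ht[OF T] by auto
  have I: "tverts tail head L \<inter> tverts tail head R = {m0}" by (rule ser.hyps(3))
  have m0L: "m0 \<in> tverts tail head L" and m0R: "m0 \<in> tverts tail head R"
    using r_st[OF ser.hyps(1)] r_st[OF ser.hyps(2)] by auto
  have mst: "m \<noteq> s" "m \<noteq> t" using cut by (auto simp: iscut_def)
  have mV: "m \<in> tverts tail head L \<union> tverts tail head R"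
    using cut_in_verts[OF cut] r_ne[OF ser.hyps(1)] by (auto simp: tverts_verts verts_Un)
  show ?case
  proof (cases "m = m0")
    case True
    then show ?thesis using ser.hyps ser.prems(1) by auto
  next
    case mm0: False
    show ?thesis
    proof (cases "m \<in> tverts tail head R")
      case mR: True
      have cl: "\<forall>e\<in>arcs L \<union> arcs R. tail e \<in> tverts tail head R \<longrightarrow> e \<in> arcs R \<and> head e \<in> tverts tail head R"
      proof (intro ballI impI)
        fix e assume e: "e \<in> arcs L \<union> arcs R" "tail e \<in> tverts tail head R"
        have "e \<notin> arcs L"
        proof
          assume eL: "e \<in> arcs L"
          then have "tail e \<in> tverts tail head L" by (auto simp: tverts_def)
          then have "tail e = m0" using I e by auto
          then show False using r_ht[OF ser.hyps(1) eL] by simp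
        qed
        then show "e \<in> arcs R \<and> head e \<in> tverts tail head R" using e by (auto simp: tverts_def)
      qed
      have cutR: "iscut (arcs R) m m0 t"
        unfolding iscut_def
      proof (intro conjI ballI)
        fix e assume eR: "e \<in> arcs R"
        from cut eR have "(head e, m) \<in> (arcrel (arcs L \<union> arcs R))\<^sup>* \<or> (m, tail e) \<in> (arcrel (arcs L \<union> arcs R))\<^sup>*"
          by (auto simp: iscut_def)
        moreover have "head e \<in> tverts tail head R" using eR by (auto simp: tverts_def)
        ultimately show "(head e, m) \<in> (arcrel (arcs R))\<^sup>* \<or> (m, tail e) \<in> (arcrel (arcs R))\<^sup>*"
          using fwd_closure[OF cl] mR by blast
      qed (use mm0 mst in auto)
      from ser.IH(2)[OF dR cutR] obtain R' R'' where
        sR: "isS R" and R': "realises tail head R' m0 m" and R'': "realises tail head R'' m t"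
        and I2: "tverts tail head R' \<inter> tverts tail head R'' = {m}"
        and d2: "distinct (leaves R' @ leaves R'')" and a2: "arcs R' \<union> arcs R'' = arcs R"
        and p2: "phi (SNode R' R'') = phi R" by blast
      have sub1: "tverts tail head R' \<subseteq> tverts tail head R" and sub2: "tverts tail head R'' \<subseteq> tverts tail head R"
        using a2 by (auto intro!: tverts_mono)
      have m0R': "m0 \<in> tverts tail head R'" using r_st[OF R'] by simp
      have IL: "tverts tail head L \<inter> tverts tail head R' = {m0}" using I sub1 m0L m0R' by auto
      have T': "realises tail head (SNode L R') s m" using ser.hyps(1) R' IL by (rule realises.ser)
      have m0R'': "m0 \<notin> tverts tail head R''" using I2 mm0 m0R' by auto
      have I3: "tverts tail head (SNode L R') \<inter> tverts tail head R'' = {m}"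
        using I2 I sub2 m0R'' by (auto simp: tverts_S)
      have d3: "distinct (leaves (SNode L R') @ leaves R'')"
        using d2 dL dLR a2 by auto
      have a3: "arcs (SNode L R') \<union> arcs R'' = arcs (SNode L R)" using a2 by auto
      have "phi (SNode (SNode L R') R'') = phi (SNode L R)"
        using p2 sR by (simp add: phi_S hval_S max.assoc)
      then show ?thesis using T' R'' I3 d3 a3 by (metis isS.simps(1))
    next
      case mR: False
      then have mL: "m \<in> tverts tail head L" using mV by auto
      have cl: "\<forall>e\<in>arcs L \<union> arcs R. head e \<in> tverts tail head L \<longrightarrow> e \<in> arcs L \<and> tail e \<in> tverts tail head L"
      proof (intro ballI impI)
        fix e assume e: "e \<in> arcs L \<union> arcs R" "head e \<in> tverts tail head L"
        have "e \<notin> arcs R"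
        proof
          assume eR: "e \<in> arcs R"
          then have "head e \<in> tverts tail head R" by (auto simp: tverts_def)
          then have "head e = m0" using I e by auto
          then show False using r_ht[OF ser.hyps(2) eR] by simp
        qed
        then show "e \<in> arcs L \<and> tail e \<in> tverts tail head L" using e by (auto simp: tverts_def)
      qed
      have cutL: "iscut (arcs L) m s m0"
        unfolding iscut_def
      proof (intro conjI ballI)
        fix e assume eL: "e \<in> arcs L"
        from cut eL have "(head e, m) \<in> (arcrel (arcs L \<union> arcs R))\<^sup>* \<or> (m, tail e) \<in> (arcrel (arcs L \<union> arcs R))\<^sup>*"
          by (auto simp: iscut_def)
        moreover have "tail e \<in> tverts tail head L" using eL by (auto simp: tverts_def)
        ultimately show "(head e, m) \<in> (arcrel (arcs L))\<^sup>* \<or> (m, tail e) \<in> (arcrel (arcs L))\<^sup>*"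
          using bwd_closure[OF cl] mL by blast
      qed (use mm0 mst in auto)
      from ser.IH(1)[OF dL cutL] obtain L' L'' where
        sL: "isS L" and L': "realises tail head L' s m" and L'': "realises tail head L'' m m0"
        and I2: "tverts tail head L' \<inter> tverts tail head L'' = {m}"
        and d2: "distinct (leaves L' @ leaves L'')" and a2: "arcs L' \<union> arcs L'' = arcs L"
        and p2: "phi (SNode L' L'') = phi L" by blast
      have sub1: "tverts tail head L' \<subseteq> tverts tail head L" and sub2: "tverts tail head L'' \<subseteq> tverts tail head L"
        using a2 by (auto intro!: tverts_mono)
      have m0L'': "m0 \<in> tverts tail head L''" using r_st[OF L''] by simp
      have IR: "tverts tail head L'' \<inter> tverts tail head R = {m0}" using I sub2 m0R m0L'' by auto
      have T'': "realises tail head (SNode L'' R) m t" using L'' ser.hyps(2) IR by (rule realises.ser)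
      have m0L': "m0 \<notin> tverts tail head L'" using I2 mm0 m0L'' by auto
      have I3: "tverts tail head L' \<inter> tverts tail head (SNode L'' R) = {m}"
        using I2 I sub1 m0L' by (auto simp: tverts_S)
      have d3: "distinct (leaves L' @ leaves (SNode L'' R))"
        using d2 dR dLR a2 by auto
      have a3: "arcs L' \<union> arcs (SNode L'' R) = arcs (SNode L R)" using a2 by auto
      have "phi (SNode L' (SNode L'' R)) = phi (SNode L R)"
        using p2 sL by (simp add: phi_S hval_S max.assoc)
      then show ?thesis using L' T'' I3 d3 a3 by (metis isS.simps(1))
    qed
  qed
qed


definition good :: "'v \<Rightarrow> 'v \<Rightarrow> 'e set \<Rightarrow> nat \<Rightarrow> bool" where
  "good s t B v \<longleftrightarrow> (B = {} \<and> v = 0) \<or>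
     (\<exists>X. realises tail head X s t \<and> distinct (leaves X) \<and> arcs X = B \<and> phi X = v)"

lemma good_self: "realises tail head T s t \<Longrightarrow> distinct (leaves T) \<Longrightarrow> good s t (arcs T) (phi T)"
  unfolding good_def by blast

lemma good_comb:
  assumes g1: "good s t B1 v1" and g2: "good s t B2 v2"
    and s1: "B1 \<subseteq> arcs L" and s2: "B2 \<subseteq> arcs R"
    and I: "tverts tail head L \<inter> tverts tail head R = {s, t}" and D: "arcs L \<inter> arcs R = {}"
  shows "good s t (B1 \<union> B2) (max v1 v2)"
proof (cases "B1 = {}")
  case True
  then have "v1 = 0" using g1 r_ne unfolding good_def by blast
  then show ?thesis using g2 True by simp
next
  case B1: False
  then obtain X1 where X1: "realises tail head X1 s t" "distinct (leaves X1)" "arcs X1 = B1" "phi X1 = v1"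
    using g1 unfolding good_def by blast
  show ?thesis
  proof (cases "B2 = {}")
    case True
    then have "v2 = 0" using g2 r_ne unfolding good_def by blast
    then show ?thesis using g1 True by simp
  next
    case B2: False
    then obtain X2 where X2: "realises tail head X2 s t" "distinct (leaves X2)" "arcs X2 = B2" "phi X2 = v2"
      using g2 unfolding good_def by blast
    have "tverts tail head X1 \<subseteq> tverts tail head L" "tverts tail head X2 \<subseteq> tverts tail head R"
      using X1 X2 s1 s2 by (auto intro!: tverts_mono)
    then have "tverts tail head X1 \<inter> tverts tail head X2 = {s, t}"
      using I r_st[OF X1(1)] r_st[OF X2(1)] by blast
    then have "realises tail head (PNode X1 X2) s t" using X1(1) X2(1) by (rule realises.par[rotated 2])
    moreover have "distinct (leaves (PNode X1 X2))" using X1 X2 s1 s2 D by auto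
    ultimately show ?thesis unfolding good_def using X1 X2 by (auto simp: phi_P)
  qed
qed

lemma good_triv:
  assumes "realises tail head T s t" "distinct (leaves T)" "B \<union> C = arcs T" "B = {} \<or> C = {}"
  shows "\<exists>vB vC. good s t B vB \<and> good s t C vC \<and> max vB vC = phi T"
proof -
  have g0: "good s t {} 0" by (simp add: good_def)
  have G: "good s t (arcs T) (phi T)" using good_self[OF assms(1,2)] .
  from assms(4) show ?thesis
  proof
    assume B: "B = {}"
    then have "C = arcs T" using assms(3) by simp
    then show ?thesis using g0 G B by (intro exI[of _ 0] exI[of _ "phi T"]) auto
  next
    assume C: "C = {}"
    then have "B = arcs T" using assms(3) by simp
    then show ?thesis using g0 G C by (intro exI[of _ "phi T"] exI[of _ 0]) auto
  qed
qed

lemma split_lemma: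
  "realises tail head T s t \<Longrightarrow> distinct (leaves T) \<Longrightarrow> B \<union> C = arcs T \<Longrightarrow> B \<inter> C = {} \<Longrightarrow>
   verts B \<inter> verts C \<subseteq> {s, t} \<Longrightarrow>
   \<exists>vB vC. good s t B vB \<and> good s t C vC \<and> max vB vC = phi T"
proof (induction arbitrary: B C rule: realises.induct)
  case (arc e s t)
  have T: "realises tail head (Leaf e) s t" using arc.hyps by (rule realises.arc)
  have "B = {} \<or> C = {}"
  proof (rule ccontr)
    assume "\<not> (B = {} \<or> C = {})"
    then obtain x y where "x \<in> B" "y \<in> C" by auto
    moreover have "B \<union> C = {e}" using arc.prems(2) by simp
    ultimately have "e \<in> B \<inter> C" by auto
    then show False using arc.prems(3) by simp
  qed
  then show ?case using good_triv[OF T arc.prems(1,2)] by blast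
next
  case (ser L s m R t)
  have T: "realises tail head (SNode L R) s t" using ser.hyps by (rule realises.ser)
  have G: "good s t (arcs (SNode L R)) (phi (SNode L R))" using good_self[OF T ser.prems(1)] .
  show ?case
  proof (cases "B = {} \<or> C = {}")
    case True
    then show ?thesis using good_triv[OF T ser.prems(1,2)] by blast
  next
    case False
    have cut: "iscut (arcs (SNode L R)) m s t" using series_is_cut[OF ser.hyps] by simp
    show ?thesis using cut_split_contra[OF T cut ser.prems(2)] False ser.prems by auto
  qed
next
  case (par L s t R)
  have dL: "distinct (leaves L)" and dR: "distinct (leaves R)" and D: "arcs L \<inter> arcs R = {}"
    using par.prems(1) by auto
  have VB: "verts (B \<inter> arcs L) \<inter> verts (C \<inter> arcs L) \<subseteq> {s, t}"
    using par.prems(4) verts_mono[of "B \<inter> arcs L" B] verts_mono[of "C \<inter> arcs L" C] by blast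
  have VC: "verts (B \<inter> arcs R) \<inter> verts (C \<inter> arcs R) \<subseteq> {s, t}"
    using par.prems(4) verts_mono[of "B \<inter> arcs R" B] verts_mono[of "C \<inter> arcs R" C] by blast
  obtain a1 b1 where A1: "good s t (B \<inter> arcs L) a1" "good s t (C \<inter> arcs L) b1" "max a1 b1 = phi L"
    using par.IH(1)[OF dL _ _ VB] par.prems(2,3) by auto
  obtain a2 b2 where A2: "good s t (B \<inter> arcs R) a2" "good s t (C \<inter> arcs R) b2" "max a2 b2 = phi R"
    using par.IH(2)[OF dR _ _ VC] par.prems(2,3) by auto
  have gB: "good s t ((B \<inter> arcs L) \<union> (B \<inter> arcs R)) (max a1 a2)"
    using good_comb[OF A1(1) A2(1) _ _ par.hyps(3) D] by auto
  have gC: "good s t ((C \<inter> arcs L) \<union> (C \<inter> arcs R)) (max b1 b2)"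
    using good_comb[OF A1(2) A2(2) _ _ par.hyps(3) D] by auto
  have eB: "(B \<inter> arcs L) \<union> (B \<inter> arcs R) = B" and eC: "(C \<inter> arcs L) \<union> (C \<inter> arcs R) = C"
    using par.prems(2) by auto
  have "max (max a1 a2) (max b1 b2) = phi (PNode L R)"
    using A1(3) A2(3) by (simp add: phi_P max.assoc max.left_commute)
  then show ?case using gB gC eB eC by metis
qed


lemma series_split_char:
  assumes L: "realises tail head L s m" and R: "realises tail head R m t"
    and I: "tverts tail head L \<inter> tverts tail head R = {m}"
  shows "arcs L = {e \<in> arcs L \<union> arcs R. (head e, m) \<in> (arcrel (arcs L \<union> arcs R))\<^sup>*}"
proof (intro equalityI subsetI)
  fix e assume e: "e \<in> arcs L"
  have "head e \<in> tverts tail head L" using e by (auto simp: tverts_def)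
  then have "(head e, m) \<in> (arcrel (arcs L))\<^sup>*" using r_reach[OF L] by blast
  moreover have "(arcrel (arcs L))\<^sup>* \<subseteq> (arcrel (arcs L \<union> arcs R))\<^sup>*" by (rule arcrel_mono) auto
  ultimately show "e \<in> {e \<in> arcs L \<union> arcs R. (head e, m) \<in> (arcrel (arcs L \<union> arcs R))\<^sup>*}" using e by auto
next
  fix e assume e: "e \<in> {e \<in> arcs L \<union> arcs R. (head e, m) \<in> (arcrel (arcs L \<union> arcs R))\<^sup>*}"
  show "e \<in> arcs L"
  proof (rule ccontr)
    assume nL: "e \<notin> arcs L"
    then have eR: "e \<in> arcs R" using e by auto
    have cl: "\<forall>e\<in>arcs L \<union> arcs R. tail e \<in> tverts tail head R - {m} \<longrightarrow> e \<in> arcs L \<union> arcs R \<and> head e \<in> tverts tail head R - {m}"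
    proof (intro ballI impI)
      fix e' assume e': "e' \<in> arcs L \<union> arcs R" "tail e' \<in> tverts tail head R - {m}"
      have "e' \<notin> arcs L"
      proof
        assume "e' \<in> arcs L"
        then have "tail e' \<in> tverts tail head L" by (auto simp: tverts_def)
        then show False using I e' by auto
      qed
      then have "e' \<in> arcs R" using e' by auto
      then show "e' \<in> arcs L \<union> arcs R \<and> head e' \<in> tverts tail head R - {m}"
        using r_ht[OF R] by (auto simp: tverts_def)
    qed
    have "head e \<in> tverts tail head R - {m}" using eR r_ht[OF R eR] by (auto simp: tverts_def)
    from fwd_closure[OF cl _ this] e have "m \<in> tverts tail head R - {m}" by blast
    then show False by simp
  qed
qed

lemma len1_leaf: "realises tail head T s t \<Longrightarrow> length (leaves T) = 1 \<Longrightarrow> \<exists>e. T = Leaf e"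
  by (erule realises.cases) (simp_all, (metis r_ne add_is_1 length_0_conv set_empty)+)

lemma main_lemma:
  "length (leaves T1) = n \<Longrightarrow> realises tail head T1 s t \<Longrightarrow> realises tail head T2 s t \<Longrightarrow>
   distinct (leaves T1) \<Longrightarrow> distinct (leaves T2) \<Longrightarrow> arcs T1 = arcs T2 \<Longrightarrow>
   phi T1 = phi T2 \<and> isS T1 = isS T2"
proof (induction n arbitrary: T1 T2 s t rule: less_induct)
  case (less n T1 T2 s t)
  have cardeq: "length (leaves T1) = length (leaves T2)"
    using less.prems(4,5,6) by (metis distinct_card)
  show ?case
  proof (cases T1)
    case (Leaf e)
    then have "length (leaves T2) = 1" using cardeq by simp
    then obtain e' where "T2 = Leaf e'" using len1_leaf[OF less.prems(3)] by blast
    then show ?thesis using Leaf by (simp add: phi_Leaf)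
  next
    case (SNode L1 R1)
    from less.prems(2) obtain m where L1: "realises tail head L1 s m" and R1: "realises tail head R1 m t"
      and I1: "tverts tail head L1 \<inter> tverts tail head R1 = {m}"
      unfolding SNode by (cases rule: realises.cases) auto
    have cut: "iscut (arcs T2) m s t"
      using series_is_cut[OF L1 R1 I1] less.prems(6) SNode by simp
    from cut_lemma[OF less.prems(3,5) cut] obtain T' T'' where
      sT2: "isS T2" and T': "realises tail head T' s m" and T'': "realises tail head T'' m t"
      and I2: "tverts tail head T' \<inter> tverts tail head T'' = {m}"
      and d2: "distinct (leaves T' @ leaves T'')" and a2: "arcs T' \<union> arcs T'' = arcs T2"
      and p2: "phi (SNode T' T'') = phi T2" by blast
    have d1: "distinct (leaves L1 @ leaves R1)" using less.prems(4) SNode by simp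
    have A: "arcs L1 \<union> arcs R1 = arcs T' \<union> arcs T''" using a2 less.prems(6) SNode by simp
    have aL: "arcs L1 = arcs T'"
      using series_split_char[OF L1 R1 I1] series_split_char[OF T' T'' I2] A by simp
    have aR: "arcs R1 = arcs T''"
      using aL A d1 d2 by auto
    have lL: "length (leaves L1) < n" and lR: "length (leaves R1) < n"
      using less.prems(1) r_ne[OF L1] r_ne[OF R1] SNode by auto
    have eL: "phi L1 = phi T' \<and> isS L1 = isS T'"
      using less.IH[OF lL refl L1 T'] d1 d2 aL by simp
    have eR: "phi R1 = phi T'' \<and> isS R1 = isS T''"
      using less.IH[OF lR refl R1 T''] d1 d2 aR by simp
    have "phi T1 = phi (SNode T' T'')"
      using eL eR SNode by (simp add: phi_S hval_def)
    then show ?thesis using p2 sT2 SNode by simp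
  next
    case (PNode L1 R1)
    from less.prems(2) have L1: "realises tail head L1 s t" and R1: "realises tail head R1 s t"
      and I1: "tverts tail head L1 \<inter> tverts tail head R1 = {s, t}"
      unfolding PNode by (cases rule: realises.cases; auto)+
    have d1: "distinct (leaves L1 @ leaves R1)" using less.prems(4) PNode by simp
    have A: "arcs L1 \<union> arcs R1 = arcs T2" using less.prems(6) PNode by simp
    have V: "verts (arcs L1) \<inter> verts (arcs R1) \<subseteq> {s, t}" using I1 by (simp add: tverts_verts)
    have D: "arcs L1 \<inter> arcs R1 = {}" using d1 by auto
    have nS: "\<not> isS T2"
    proof
      assume "isS T2"
      then obtain l r where T2: "T2 = SNode l r" by (cases T2) auto
      from less.prems(3) obtain m where l: "realises tail head l s m" and r: "realises tail head r m t"
        and I: "tverts tail head l \<inter> tverts tail head r = {m}"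
        unfolding T2 by (cases rule: realises.cases) auto
      have cut: "iscut (arcs T2) m s t" using series_is_cut[OF l r I] T2 by simp
      show False using cut_split_contra[OF less.prems(3) cut A r_ne[OF L1] r_ne[OF R1] V] .
    qed
    from split_lemma[OF less.prems(3,5) A D V] obtain vB vC where
      gB: "good s t (arcs L1) vB" and gC: "good s t (arcs R1) vC" and mx: "max vB vC = phi T2" by blast
    obtain X where X: "realises tail head X s t" "distinct (leaves X)" "arcs X = arcs L1" "phi X = vB"
      using gB r_ne[OF L1] unfolding good_def by blast
    obtain Y where Y: "realises tail head Y s t" "distinct (leaves Y)" "arcs Y = arcs R1" "phi Y = vC"
      using gC r_ne[OF R1] unfolding good_def by blast
    have lL: "length (leaves L1) < n" and lR: "length (leaves R1) < n"
      using less.prems(1) r_ne[OF L1] r_ne[OF R1] PNode by auto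
    have "phi L1 = vB" using less.IH[OF lL refl L1 X(1)] d1 X by simp
    moreover have "phi R1 = vC" using less.IH[OF lR refl R1 Y(1)] d1 Y by simp
    ultimately show ?thesis using mx nS PNode by (simp add: phi_P)
  qed
qed

end


theorem mainTheorem11:
  fixes A :: "'e set" and tail head :: "'e \<Rightarrow> 'v" and s t :: 'v
  assumes "sp_digraph A tail head s t"
    and "is_decomp_tree A tail head s t T1"
    and "is_decomp_tree A tail head s t T2"
  shows "phi T1 = phi T2"
  using assms(2,3) unfolding is_decomp_tree_def by (metis main_lemma)

end
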